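(* Consider a generalized broadcast process with parameters $m$, $k$ and $M$. Suppose $S_1,\dots,S_{m'}$ is a partition of $\{1,\dots,m\}$ such that, writing $w^{(i)}=\sum_{j\in S_i}e_j$, for all $1\le i,i'\le m'$ and all $j,j'\in S_i$ we have $w^{(i')}\cdot Me_j=w^{(i')}\cdot Me_{j'}$. Let $M'$ be the $m'\times m'$ matrix with $M'_{i,i'}=w^{(i)}\cdot Me_j$ for any $j\in S_{i'}$. If there is a $\mathbf{TC}^0$ detection function family for the generalized broadcast process with parameters $(m',M')$ (and the same $k$), then there is a $\mathbf{TC}^0$ detection function family for the process with parameters $(m,M)$.
   Context: Generalized broadcast process with parameters $m$, $k$, $M$: $M$ is an $m\times m$ matrix with nonnegative entries whose columns sum to 1. On the complete $k$-ary tree of depth $d$, the root label is uniform in $\{1,\dots,m\}$, and each child of a vertex with label $j$ independently receives label $i$ with probability $M_{i,j}$. $X^{(r)}$ is the vector of labels at depth $r$; $e_j$ denotes the $j$-th standard basis vector. A detection function family is a family $f_d$ mapping $X^{(d)}$ to a label with $\mathbb{P}[f_d(X^{(d)})=X^{(0)}]\ge 1/m+\delta$ for some $\delta>0$ and all $d\ge d_0$. $\mathbf{TC}^0$: constant-depth polynomial-size circuits of unbounded fan-in threshold gates, labels encoded as fixed-length bit strings. *)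

theory Defs
  imports Main "HOL.Real"
begin

text \<open>Labels are 0-indexed: {0..<m}. A matrix is a function nat => nat => real,
  entry (i,j) = M i j. Column-stochastic: nonnegative, columns sum to 1.\<close>

definition stochastic :: "(nat \<Rightarrow> nat \<Rightarrow> real) \<Rightarrow> nat \<Rightarrow> bool" where
  "stochastic M m \<longleftrightarrow> (\<forall>i<m. \<forall>j<m. 0 \<le> M i j) \<and> (\<forall>j<m. (\<Sum>i<m. M i j) = 1)"

text \<open>Probability that the leaf labels (depth d, left-to-right, a list of length k^d)
  of the broadcast process on the complete k-ary tree equal xs, given root label j.\<close>

fun leafprob :: "(nat \<Rightarrow> nat \<Rightarrow> real) \<Rightarrow> nat \<Rightarrow> nat \<Rightarrow> nat \<Rightarrow> nat \<Rightarrow> nat list \<Rightarrow> real" where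
  "leafprob M m k 0 j xs = (if xs = [j] then 1 else 0)"
| "leafprob M m k (Suc d) j xs =
     (if length xs = k ^ Suc d then
        (\<Prod>l<k. \<Sum>i<m. M i j * leafprob M m k d i (take (k ^ d) (drop (l * k ^ d) xs)))
      else 0)"

definition leaf_configs :: "nat \<Rightarrow> nat \<Rightarrow> nat \<Rightarrow> nat list set" where
  "leaf_configs m k d = {xs. length xs = k ^ d \<and> set xs \<subseteq> {..<m}}"

definition success :: "(nat \<Rightarrow> nat \<Rightarrow> real) \<Rightarrow> nat \<Rightarrow> nat \<Rightarrow> nat \<Rightarrow> (nat list \<Rightarrow> nat) \<Rightarrow> real" where
  "success M m k d f = (1 / real m) *
     (\<Sum>j<m. \<Sum>xs\<in>leaf_configs m k d. leafprob M m k d j xs * (if f xs = j then 1 else 0))"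

text \<open>Threshold circuits (as formulas; for constant depth, polynomial-size circuits and
  polynomial-size formulas coincide): input bits, negation, and unbounded fan-in
  threshold gates Thr t cs = [at least t of the children are true].\<close>

datatype circ = Inp nat | Neg circ | Thr nat "circ list"

fun ceval :: "(nat \<Rightarrow> bool) \<Rightarrow> circ \<Rightarrow> bool" where
  "ceval \<rho> (Inp p) = \<rho> p"
| "ceval \<rho> (Neg c) = (\<not> ceval \<rho> c)"
| "ceval \<rho> (Thr t cs) = (t \<le> length (filter id (map (ceval \<rho>) cs)))"

fun cdepth :: "circ \<Rightarrow> nat" where
  "cdepth (Inp p) = 0"
| "cdepth (Neg c) = Suc (cdepth c)"
| "cdepth (Thr t cs) = Suc (fold max (map cdepth cs) 0)"

fun csize :: "circ \<Rightarrow> nat" where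
  "csize (Inp p) = 1"
| "csize (Neg c) = Suc (csize c)"
| "csize (Thr t cs) = Suc (sum_list (map csize cs))"

definition bitlen :: "nat \<Rightarrow> nat" where
  "bitlen m = (LEAST b. m \<le> 2 ^ b)"

definition inbits :: "nat \<Rightarrow> nat list \<Rightarrow> nat \<Rightarrow> bool" where
  "inbits b xs p = (p < length xs * b \<and> odd ((xs ! (p div b)) div 2 ^ (p mod b)))"

definition circ_fun :: "nat \<Rightarrow> circ list \<Rightarrow> nat list \<Rightarrow> nat" where
  "circ_fun b cs xs = (\<Sum>i<length cs. if ceval (inbits b xs) (cs ! i) then 2 ^ i else 0)"

definition TC0_detectable :: "(nat \<Rightarrow> nat \<Rightarrow> real) \<Rightarrow> nat \<Rightarrow> nat \<Rightarrow> bool" where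
  "TC0_detectable M m k \<longleftrightarrow>
     (\<exists>\<delta>>0. \<exists>d0 c a e. \<exists>C :: nat \<Rightarrow> circ list. \<forall>d\<ge>d0.
        length (C d) = bitlen m \<and>
        (\<forall>g\<in>set (C d). cdepth g \<le> c \<and> csize g \<le> a * (k ^ d * bitlen m) ^ e + a) \<and>
        success M m k d (circ_fun (bitlen m) (C d)) \<ge> 1 / real m + \<delta>)"

end

theory Submission
  imports Defs
begin


definition FALSEc :: circ where "FALSEc = Thr 1 []"
definition lit :: "bool \<Rightarrow> circ \<Rightarrow> circ" where "lit b c = (if b then c else Neg c)"
definition andc :: "circ list \<Rightarrow> circ" where "andc cs = Thr (length cs) cs"
definition orc :: "circ list \<Rightarrow> circ" where "orc cs = Thr 1 cs"
definition tab :: "(bool list \<Rightarrow> bool) \<Rightarrow> circ list \<Rightarrow> circ" where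
  "tab P cs = orc (map (\<lambda>v. andc (map (\<lambda>(b,c). lit b c) (zip v cs)))
      (filter P (List.n_lists (length cs) [True,False])))"

fun subst :: "(nat \<Rightarrow> circ) \<Rightarrow> circ \<Rightarrow> circ" where
  "subst \<sigma> (Inp p) = \<sigma> p"
| "subst \<sigma> (Neg c) = Neg (subst \<sigma> c)"
| "subst \<sigma> (Thr t cs) = Thr t (map (subst \<sigma>) cs)"

lemma ceval_FALSE[simp]: "\<not> ceval \<rho> FALSEc" by (simp add: FALSEc_def)

lemma ceval_lit: "ceval \<rho> (lit b c) = (ceval \<rho> c = b)" by (auto simp: lit_def)

lemma ceval_andc: "ceval \<rho> (andc cs) = (\<forall>c\<in>set cs. ceval \<rho> c)"
proof
  assume a: "ceval \<rho> (andc cs)"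
  show "\<forall>c\<in>set cs. ceval \<rho> c"
  proof (rule ccontr)
    assume "\<not> (\<forall>c\<in>set cs. ceval \<rho> c)"
    then obtain c where "c \<in> set cs" "\<not> ceval \<rho> c" by blast
    hence "length (filter id (map (ceval \<rho>) cs)) < length (map (ceval \<rho>) cs)"
      by (intro length_filter_less) auto
    with a show False by (simp add: andc_def)
  qed
next
  assume "\<forall>c\<in>set cs. ceval \<rho> c"
  hence "filter id (map (ceval \<rho>) cs) = map (ceval \<rho>) cs" by (auto simp: filter_id_conv)
  thus "ceval \<rho> (andc cs)" by (simp add: andc_def)
qed

lemma ceval_orc: "ceval \<rho> (orc cs) = (\<exists>c\<in>set cs. ceval \<rho> c)"
  by (auto simp: orc_def Suc_le_eq filter_empty_conv length_greater_0_conv)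

lemma ceval_andlit: "length v = length cs \<Longrightarrow>
  ceval \<rho> (andc (map (\<lambda>(b,c). lit b c) (zip v cs))) = (v = map (ceval \<rho>) cs)"
  by (induction v cs rule: list_induct2) (auto simp: ceval_andc ceval_lit)

lemma ceval_tab: "ceval \<rho> (tab P cs) = P (map (ceval \<rho>) cs)"
proof -
  have "map (ceval \<rho>) cs \<in> set (List.n_lists (length cs) [True,False])"
    by (auto simp: set_n_lists)
  thus ?thesis
    by (auto simp: tab_def ceval_orc ceval_andlit length_n_lists_elem)
qed

lemma ceval_subst: "ceval \<rho> (subst \<sigma> c) = ceval (\<lambda>p. ceval \<rho> (\<sigma> p)) c"
proof (induction \<sigma> c rule: subst.induct)
  case (3 \<sigma> t cs)
  have "filter (ceval \<rho> \<circ> subst \<sigma>) cs = filter (ceval (\<lambda>p. ceval \<rho> (\<sigma> p))) cs"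
    using 3 by (intro filter_cong) auto
  thus ?case by simp
qed auto

lemma fold_max_le: "fold max xs a \<le> (N::nat) \<longleftrightarrow> a \<le> N \<and> (\<forall>x\<in>set xs. x \<le> N)"
  by (induction xs arbitrary: a) auto

lemma cdepth_subst: "(\<forall>p. cdepth (\<sigma> p) \<le> D) \<Longrightarrow> cdepth (subst \<sigma> c) \<le> cdepth c + D"
proof (induction \<sigma> c rule: subst.induct)
  case (3 \<sigma> t cs)
  have "\<forall>c\<in>set cs. cdepth (subst \<sigma> c) \<le> fold max (map cdepth cs) 0 + D"
  proof
    fix c assume c: "c \<in> set cs"
    have "cdepth c \<le> fold max (map cdepth cs) 0"
      using fold_max_le[of "map cdepth cs" 0 "fold max (map cdepth cs) 0"] c by auto
    thus "cdepth (subst \<sigma> c) \<le> fold max (map cdepth cs) 0 + D" using 3 c by fastforce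
  qed
  thus ?case by (simp add: fold_max_le)
qed auto

lemma cdepth_tab: "(\<forall>c\<in>set cs. cdepth c \<le> D) \<Longrightarrow> cdepth (tab P cs) \<le> D + 3"
  by (auto simp: tab_def orc_def andc_def lit_def fold_max_le dest!: set_zip_rightD)

lemma sum_list_le_len: "(\<forall>x\<in>set xs. f x \<le> (K::nat)) \<Longrightarrow> sum_list (map f xs) \<le> length xs * K"
  by (induction xs) auto

lemma csize_andlit: "length v = length cs \<Longrightarrow>
  csize (andc (map (\<lambda>(b,c). lit b c) (zip v cs))) \<le> 1 + length cs + sum_list (map csize cs)"
  by (induction v cs rule: list_induct2) (auto simp: andc_def lit_def)

lemma csize_tab: "csize (tab P cs) \<le> 1 + 2 ^ length cs * (1 + length cs + sum_list (map csize cs))"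
proof -
  let ?L = "filter P (List.n_lists (length cs) [True,False])"
  have "sum_list (map (\<lambda>v. csize (andc (map (\<lambda>(b,c). lit b c) (zip v cs)))) ?L)
        \<le> length ?L * (1 + length cs + sum_list (map csize cs))"
    by (rule sum_list_le_len) (use csize_andlit length_n_lists_elem in fastforce)
  also have "\<dots> \<le> 2 ^ length cs * (1 + length cs + sum_list (map csize cs))"
    using length_filter_le[of P "List.n_lists (length cs) [True,False]"]
    by (intro mult_right_mono) (auto simp: length_n_lists numeral_2_eq_2)
  finally show ?thesis by (simp add: tab_def orc_def comp_def)
qed

lemma csize_subst: "(\<forall>p. csize (\<sigma> p) \<le> Z) \<Longrightarrow> 1 \<le> Z \<Longrightarrow> csize (subst \<sigma> c) \<le> csize c * Z"
proof (induction \<sigma> c rule: subst.induct)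
  case (3 \<sigma> t cs)
  have "sum_list (map (\<lambda>c. csize (subst \<sigma> c)) cs) \<le> sum_list (map (\<lambda>c. csize c * Z) cs)"
    using 3 by (intro sum_list_mono) auto
  also have "\<dots> = sum_list (map csize cs) * Z" by (rule sum_list_mult_const)
  finally show ?case using 3 by (simp add: comp_def)
qed auto



definition fibr :: "nat \<Rightarrow> (nat \<Rightarrow> nat) \<Rightarrow> nat \<Rightarrow> nat list \<Rightarrow> nat list set" where
  "fibr m \<pi> n ys = {xs. length xs = n \<and> set xs \<subseteq> {..<m} \<and> map \<pi> xs = ys}"

lemma finite_fibr: "finite (fibr m \<pi> n ys)"
proof -
  have "fibr m \<pi> n ys \<subseteq> {xs. set xs \<subseteq> {..<m} \<and> length xs = n}" by (auto simp: fibr_def)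
  thus ?thesis using finite_lists_length_eq[of "{..<m}" n] finite_subset by blast
qed

lemma fibr_Suc: "length ys = Suc K * n \<Longrightarrow> fibr m \<pi> (Suc K * n) ys =
   (\<lambda>(a,b). a @ b) ` (fibr m \<pi> n (take n ys) \<times> fibr m \<pi> (K*n) (drop n ys))"
proof (intro equalityI subsetI)
  fix xs assume "xs \<in> fibr m \<pi> (Suc K * n) ys"
  hence x: "length xs = n + K*n" "set xs \<subseteq> {..<m}" "map \<pi> xs = ys" by (auto simp: fibr_def)
  have "take n xs \<in> fibr m \<pi> n (take n ys)" "drop n xs \<in> fibr m \<pi> (K*n) (drop n ys)"
    using x by (auto simp: fibr_def take_map drop_map dest: in_set_takeD in_set_dropD)
  moreover have "xs = (\<lambda>(a,b). a @ b) (take n xs, drop n xs)" by simp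
  ultimately show "xs \<in> (\<lambda>(a,b). a @ b) ` (fibr m \<pi> n (take n ys) \<times> fibr m \<pi> (K*n) (drop n ys))"
    by blast
next
  fix xs assume "xs \<in> (\<lambda>(a,b). a @ b) ` (fibr m \<pi> n (take n ys) \<times> fibr m \<pi> (K*n) (drop n ys))"
  then obtain a b where "xs = a @ b" "a \<in> fibr m \<pi> n (take n ys)" "b \<in> fibr m \<pi> (K*n) (drop n ys)"
    by auto
  thus "xs \<in> fibr m \<pi> (Suc K * n) ys"
    by (auto simp: fibr_def)
qed

lemma blocks:
  fixes F :: "nat \<Rightarrow> nat list \<Rightarrow> real"
  shows "length ys = K * n \<Longrightarrow>
   (\<Sum>xs\<in>fibr m \<pi> (K*n) ys. \<Prod>l<K. F l (take n (drop (l*n) xs)))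
   = (\<Prod>l<K. \<Sum>zs\<in>fibr m \<pi> n (take n (drop (l*n) ys)). F l zs)"
proof (induction K arbitrary: F ys)
  case 0
  hence "fibr m \<pi> (0*n) ys = {[]}" by (auto simp: fibr_def)
  thus ?case by simp
next
  case (Suc K)
  let ?A = "fibr m \<pi> n (take n ys)" and ?B = "fibr m \<pi> (K*n) (drop n ys)"
  have inj: "inj_on (\<lambda>(a,b). a @ b) (?A \<times> ?B)"
    by (auto simp: inj_on_def fibr_def)
  have len: "length (drop n ys) = K * n" using Suc.prems by simp
  have "(\<Sum>xs\<in>fibr m \<pi> (Suc K*n) ys. \<Prod>l<Suc K. F l (take n (drop (l*n) xs)))
      = (\<Sum>(a,b)\<in>?A \<times> ?B. \<Prod>l<Suc K. F l (take n (drop (l*n) (a @ b))))"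
    unfolding fibr_Suc[OF Suc.prems] by (subst sum.reindex[OF inj]) (simp add: case_prod_beta)
  also have "\<dots> = (\<Sum>(a,b)\<in>?A \<times> ?B. F 0 a * (\<Prod>l<K. F (Suc l) (take n (drop (l*n) b))))"
  proof (intro sum.cong refl, clarify)
    fix a b assume "a \<in> ?A" "b \<in> ?B"
    hence la: "length a = n" by (auto simp: fibr_def)
    show "(\<Prod>l<Suc K. F l (take n (drop (l*n) (a @ b)))) = F 0 a * (\<Prod>l<K. F (Suc l) (take n (drop (l*n) b)))"
      by (subst prod.lessThan_Suc_shift) (simp add: la)
  qed
  also have "\<dots> = (\<Sum>a\<in>?A. F 0 a) * (\<Sum>b\<in>?B. \<Prod>l<K. F (Suc l) (take n (drop (l*n) b)))"
    by (simp add: sum_product sum.cartesian_product)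
  also have "\<dots> = (\<Sum>a\<in>?A. F 0 a) * (\<Prod>l<K. \<Sum>zs\<in>fibr m \<pi> n (take n (drop (l*n) (drop n ys))). F (Suc l) zs)"
    using Suc.IH[OF len, of "\<lambda>l. F (Suc l)"] by simp
  also have "\<dots> = (\<Prod>l<Suc K. \<Sum>zs\<in>fibr m \<pi> n (take n (drop (l*n) ys)). F l zs)"
    by (subst prod.lessThan_Suc_shift) (simp add: add.commute)
  finally show ?case .
qed

lemma leafprob_nonneg:
  assumes "\<forall>i<m. \<forall>j<m. 0 \<le> M i j"
  shows "j < m \<Longrightarrow> 0 \<le> leafprob M m k d j xs"
proof (induction d arbitrary: j xs)
  case (Suc d)
  thus ?case using assms by (auto intro!: prod_nonneg sum_nonneg mult_nonneg_nonneg)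
qed auto

lemma lump:
  assumes A1: "\<forall>x<m. \<pi> x < m'"
    and A2: "\<And>j h. j < m \<Longrightarrow> (\<Sum>i<m. M i j * h (\<pi> i)) = (\<Sum>i'<m'. M' i' (\<pi> j) * h i')"
  shows "j < m \<Longrightarrow> (\<Sum>xs\<in>fibr m \<pi> (k^d) ys. leafprob M m k d j xs) = leafprob M' m' k d (\<pi> j) ys"
proof (induction d arbitrary: j ys)
  case 0
  have "(\<Sum>xs\<in>fibr m \<pi> (k^0) ys. leafprob M m k 0 j xs) = (if [j] \<in> fibr m \<pi> (k^0) ys then 1 else 0)"
    by (simp add: sum.delta' finite_fibr)
  also have "\<dots> = leafprob M' m' k 0 (\<pi> j) ys" using 0 by (auto simp: fibr_def)
  finally show ?case .
next
  case (Suc d)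
  show ?case
  proof (cases "length ys = k ^ Suc d")
    case False
    hence "fibr m \<pi> (k ^ Suc d) ys = {}" by (auto simp: fibr_def)
    thus ?thesis using False by simp
  next
    case True
    let ?F = "\<lambda>l zs. \<Sum>i<m. M i j * leafprob M m k d i zs"
    have "(\<Sum>xs\<in>fibr m \<pi> (k ^ Suc d) ys. leafprob M m k (Suc d) j xs)
        = (\<Sum>xs\<in>fibr m \<pi> (k * k ^ d) ys. \<Prod>l<k. ?F l (take (k^d) (drop (l * k^d) xs)))"
      by (intro sum.cong) (auto simp: fibr_def)
    also have "\<dots> = (\<Prod>l<k. \<Sum>zs\<in>fibr m \<pi> (k^d) (take (k^d) (drop (l*k^d) ys)). ?F l zs)"
      by (rule blocks) (use True in simp)
    also have "\<dots> = (\<Prod>l<k. \<Sum>i<m. M i j * leafprob M' m' k d (\<pi> i) (take (k^d) (drop (l*k^d) ys)))"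
    proof (intro prod.cong refl)
      fix l
      have "(\<Sum>zs\<in>fibr m \<pi> (k^d) (take (k^d) (drop (l*k^d) ys)). ?F l zs)
          = (\<Sum>i<m. M i j * (\<Sum>zs\<in>fibr m \<pi> (k^d) (take (k^d) (drop (l*k^d) ys)). leafprob M m k d i zs))"
        by (simp add: sum.swap[of _ "fibr m \<pi> (k^d) _"] sum_distrib_left)
      also have "\<dots> = (\<Sum>i<m. M i j * leafprob M' m' k d (\<pi> i) (take (k^d) (drop (l*k^d) ys)))"
        using Suc.IH by (intro sum.cong refl) auto
      finally show "(\<Sum>zs\<in>fibr m \<pi> (k^d) (take (k^d) (drop (l*k^d) ys)). ?F l zs)
          = (\<Sum>i<m. M i j * leafprob M' m' k d (\<pi> i) (take (k^d) (drop (l*k^d) ys)))" .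
    qed
    also have "\<dots> = (\<Prod>l<k. \<Sum>i'<m'. M' i' (\<pi> j) * leafprob M' m' k d i' (take (k^d) (drop (l*k^d) ys)))"
      by (intro prod.cong refl) (rule A2[OF Suc.prems, of "\<lambda>i'. leafprob M' m' k d i' (take (k^d) (drop (_*k^d) ys))"])
    also have "\<dots> = leafprob M' m' k (Suc d) (\<pi> j) ys" using True by simp
    finally show ?thesis .
  qed
qed



definition bnum :: "bool list \<Rightarrow> nat" where
  "bnum v = (\<Sum>i<length v. if v!i then 2^i else 0)"

lemma circ_fun_bnum: "circ_fun b cs xs = bnum (map (ceval (inbits b xs)) cs)"
  by (simp add: circ_fun_def bnum_def)

lemma bits_sum: "(\<Sum>i<B. if odd (x div 2^i) then 2^i else 0) = (x::nat) mod 2^B"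
proof (induction B)
  case (Suc B)
  have "x mod 2 ^ Suc B = 2^B * (x div 2^B mod 2) + x mod 2^B"
    using mod_mult2_eq[of x "2^B" 2] by (simp add: mult.commute)
  thus ?case using Suc by (auto simp: odd_iff_mod_2_eq_one even_iff_mod_2_eq_zero)
qed simp

lemma success_ge:
  assumes nonneg: "\<forall>i<m. \<forall>j<m. 0 \<le> M i j"
    and A1: "\<forall>x<m. \<pi> x < m'"
    and A2: "\<And>j h. j < m \<Longrightarrow> (\<Sum>i<m. M i j * h (\<pi> i)) = (\<Sum>i'<m'. M' i' (\<pi> j) * h i')"
    and rep: "\<forall>i<m'. rep i < m \<and> \<pi> (rep i) = i"
    and f: "\<forall>xs\<in>leaf_configs m k d. f xs = rep (g (map \<pi> xs)) mod 2^B"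
    and mB: "m \<le> 2^B"
  shows "(\<Sum>j<m. \<Sum>xs\<in>leaf_configs m k d. leafprob M m k d j xs * (if f xs = j then 1 else 0))
     \<ge> (\<Sum>i<m'. \<Sum>ys\<in>leaf_configs m' k d. leafprob M' m' k d i ys * (if g ys = i then 1 else 0))"
proof -
  define H where "H i = (\<Sum>ys\<in>leaf_configs m' k d. leafprob M' m' k d i ys * (if g ys = i then 1 else 0))" for i
  have finc: "finite (leaf_configs m k d)" for m
  proof -
    have "leaf_configs m k d = {xs. set xs \<subseteq> {..<m} \<and> length xs = k^d}" by (auto simp: leaf_configs_def)
    thus ?thesis using finite_lists_length_eq[of "{..<m}" "k^d"] by simp
  qed
  have step2: "(\<Sum>xs\<in>leaf_configs m k d. leafprob M m k d j xs * (if g (map \<pi> xs) = \<pi> j then 1 else 0)) = H (\<pi> j)"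
    if j: "j < m" for j
  proof -
    have img: "map \<pi> ` leaf_configs m k d \<subseteq> leaf_configs m' k d"
      using A1 by (force simp: leaf_configs_def)
    have "(\<Sum>xs\<in>leaf_configs m k d. leafprob M m k d j xs * (if g (map \<pi> xs) = \<pi> j then 1 else 0))
      = (\<Sum>ys\<in>leaf_configs m' k d. \<Sum>xs\<in>{x. x \<in> leaf_configs m k d \<and> map \<pi> x = ys}.
            leafprob M m k d j xs * (if g (map \<pi> xs) = \<pi> j then 1 else 0))"
      by (rule sum.group[symmetric, OF finc finc img])
    also have "\<dots> = (\<Sum>ys\<in>leaf_configs m' k d. (\<Sum>xs\<in>fibr m \<pi> (k^d) ys. leafprob M m k d j xs) * (if g ys = \<pi> j then 1 else 0))"
    proof (intro sum.cong refl)
      fix ys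
      have e: "{x. x \<in> leaf_configs m k d \<and> map \<pi> x = ys} = fibr m \<pi> (k^d) ys"
        by (auto simp: leaf_configs_def fibr_def)
      show "(\<Sum>xs\<in>{x. x \<in> leaf_configs m k d \<and> map \<pi> x = ys}.
            leafprob M m k d j xs * (if g (map \<pi> xs) = \<pi> j then 1 else 0))
          = (\<Sum>xs\<in>fibr m \<pi> (k^d) ys. leafprob M m k d j xs) * (if g ys = \<pi> j then 1 else 0)"
        unfolding e sum_distrib_right by (intro sum.cong refl) (auto simp: fibr_def)
    qed
    also have "\<dots> = H (\<pi> j)"
      unfolding H_def using lump[of m \<pi> m' M M' j k d, OF A1 A2 j] by simp
    finally show ?thesis .
  qed
  have "(\<Sum>j<m. \<Sum>xs\<in>leaf_configs m k d. leafprob M m k d j xs * (if f xs = j then 1 else 0))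
      \<ge> (\<Sum>j<m. if rep (\<pi> j) = j then H (\<pi> j) else 0)"
  proof (intro sum_mono)
    fix j assume "j \<in> {..<m}"
    hence j: "j < m" by simp
    show "(if rep (\<pi> j) = j then H (\<pi> j) else 0)
        \<le> (\<Sum>xs\<in>leaf_configs m k d. leafprob M m k d j xs * (if f xs = j then 1 else 0))"
    proof (cases "rep (\<pi> j) = j")
      case True
      have "H (\<pi> j) \<le> (\<Sum>xs\<in>leaf_configs m k d. leafprob M m k d j xs * (if f xs = j then 1 else 0))"
        unfolding step2[OF j, symmetric]
      proof (intro sum_mono mult_left_mono)
        fix xs assume xs: "xs \<in> leaf_configs m k d"
        show "0 \<le> leafprob M m k d j xs" using leafprob_nonneg[OF nonneg j] .
        have "g (map \<pi> xs) = \<pi> j \<Longrightarrow> f xs = j" using f xs True j mB by auto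
        thus "(if g (map \<pi> xs) = \<pi> j then 1 else 0) \<le> (if f xs = j then 1 else (0::real))" by auto
      qed
      thus ?thesis using True by simp
    next
      case False
      thus ?thesis using leafprob_nonneg[OF nonneg j] by (auto intro!: sum_nonneg)
    qed
  qed
  also have "(\<Sum>j<m. if rep (\<pi> j) = j then H (\<pi> j) else 0) = (\<Sum>j\<in>{j\<in>{..<m}. rep (\<pi> j) = j}. H (\<pi> j))"
    by (subst sum.inter_filter) auto
  also have "{j\<in>{..<m}. rep (\<pi> j) = j} = rep ` {..<m'}"
    using rep A1 by force
  also have "(\<Sum>j\<in>rep ` {..<m'}. H (\<pi> j)) = (\<Sum>i<m'. H (\<pi> (rep i)))"
  proof -
    have "inj_on rep {..<m'}" using rep by (metis inj_onI lessThan_iff)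
    thus ?thesis by (simp add: sum.reindex)
  qed
  also have "\<dots> = (\<Sum>i<m'. H i)" using rep by simp
  finally show ?thesis unfolding H_def .
qed

lemma arith_bound:
  fixes X Y q b a z :: nat
  assumes "X \<le> Y"
  shows "1 + q*(1 + b + b*((a*X+a)*z)) \<le> (1 + q*(1+b) + 2*(q*b*a*z)) * Y + (1 + q*(1+b) + 2*(q*b*a*z))"
proof -
  have e: "1 + q*(1 + b + b*((a*X+a)*z)) = (1 + q*(1+b) + q*b*a*z) + (q*b*a*z)*X"
    by (simp add: algebra_simps)
  have "(q*b*a*z)*X \<le> (1 + q*(1+b) + 2*(q*b*a*z)) * Y"
    using assms by (intro mult_le_mono) auto
  thus ?thesis unfolding e by linarith
qed



lemma bnum_map_upt: "bnum (map f [0..<B]) = (\<Sum>i<B. if f i then 2^i else 0)"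
  by (auto simp: bnum_def intro!: sum.cong)

theorem mainTheorem9:
  fixes m m' k :: nat and M M' :: "nat \<Rightarrow> nat \<Rightarrow> real" and S :: "nat \<Rightarrow> nat set"
  assumes stoch: "stochastic M m"
    and blocks_nonempty: "\<forall>i<m'. S i \<noteq> {}"
    and blocks_disjoint: "\<forall>i<m'. \<forall>i'<m'. i \<noteq> i' \<longrightarrow> S i \<inter> S i' = {}"
    and blocks_cover: "(\<Union>i<m'. S i) = {..<m}"
    and lumpable: "\<forall>i<m'. \<forall>i'<m'. \<forall>j\<in>S i. \<forall>j'\<in>S i.
                     (\<Sum>l\<in>S i'. M l j) = (\<Sum>l\<in>S i'. M l j')"
    and M'_def: "\<forall>i<m'. \<forall>i'<m'. \<forall>j\<in>S i'. M' i i' = (\<Sum>l\<in>S i. M l j)"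
    and detect': "TC0_detectable M' m' k"
  shows "TC0_detectable M m k"
proof -
  from detect' obtain \<delta> d0 c a e and C :: "nat \<Rightarrow> circ list" where
    \<delta>: "\<delta> > 0" and HC: "\<forall>d\<ge>d0. length (C d) = bitlen m' \<and>
        (\<forall>g\<in>set (C d). cdepth g \<le> c \<and> csize g \<le> a * (k ^ d * bitlen m') ^ e + a) \<and>
        success M' m' k d (circ_fun (bitlen m') (C d)) \<ge> 1 / real m' + \<delta>"
    unfolding TC0_detectable_def by blast
  define B where "B = bitlen m"
  define B' where "B' = bitlen m'"
  define \<pi> where "\<pi> x = (SOME i. i < m' \<and> x \<in> S i)" for x
  define rep where "rep i = (SOME j. j \<in> S i)" for i
  have pi1: "\<pi> x < m' \<and> x \<in> S (\<pi> x)" if "x < m" for x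
  proof -
    have "\<exists>i. i < m' \<and> x \<in> S i" using blocks_cover that by blast
    thus ?thesis unfolding \<pi>_def by (rule someI_ex)
  qed
  have pi2: "\<pi> x = i" if "i < m'" "x \<in> S i" for x i
  proof -
    have "x < m" using blocks_cover that by blast
    hence "\<pi> x < m'" "x \<in> S (\<pi> x)" using pi1 by auto
    thus ?thesis using blocks_disjoint that by blast
  qed
  have rep1: "rep i \<in> S i" if "i < m'" for i
    using blocks_nonempty that unfolding rep_def by (simp add: some_in_eq)
  have Ssub: "S i \<subseteq> {..<m}" if "i < m'" for i using blocks_cover that by blast
  have rep: "\<forall>i<m'. rep i < m \<and> \<pi> (rep i) = i" using rep1 Ssub pi2 by blast
  have A1: "\<forall>x<m. \<pi> x < m'" using pi1 by blast
  have A2: "(\<Sum>i<m. M i j * h (\<pi> i)) = (\<Sum>i'<m'. M' i' (\<pi> j) * h i')" if j: "j < m" for j h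
  proof -
    have fin: "finite (S i)" if "i < m'" for i using Ssub[OF that] finite_subset by blast
    have "(\<Sum>i<m. M i j * h (\<pi> i)) = (\<Sum>i'<m'. \<Sum>i\<in>S i'. M i j * h (\<pi> i))"
      unfolding blocks_cover[symmetric]
      by (rule sum.UNION_disjoint) (use fin blocks_disjoint in auto)
    also have "\<dots> = (\<Sum>i'<m'. (\<Sum>i\<in>S i'. M i j) * h i')"
      by (intro sum.cong refl) (simp add: sum_distrib_right pi2)
    also have "\<dots> = (\<Sum>i'<m'. M' i' (\<pi> j) * h i')"
      using M'_def pi1[OF j] by (intro sum.cong refl) auto
    finally show ?thesis .
  qed
  have nonneg: "\<forall>i<m. \<forall>j<m. 0 \<le> M i j" using stoch by (simp add: stochastic_def)
  have mB: "m \<le> 2^B" unfolding B_def bitlen_def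
    by (rule LeastI[of _ m]) (simp add: less_imp_le)
  have "inj_on rep {..<m'}" using rep by (metis inj_onI lessThan_iff)
  moreover have "rep ` {..<m'} \<subseteq> {..<m}" using rep by auto
  ultimately have m'm: "m' \<le> m" using card_inj_on_le[of rep "{..<m'}" "{..<m}"] by simp
  have BB: "B' \<le> B" unfolding B'_def bitlen_def
    by (rule Least_le) (use mB m'm B_def bitlen_def in simp)
  have m'pos: "m' > 0"
  proof (rule ccontr)
    assume "\<not> m' > 0"
    hence "m' = 0" by simp
    thus False using HC \<delta> by (auto simp: success_def)
  qed
  hence mpos: "m > 0" using m'm by simp
  define \<sigma> where "\<sigma> d p = (if p < k^d * B' then tab (\<lambda>v. odd (\<pi> (bnum v) div 2^(p mod B')))
      (map (\<lambda>r. Inp (p div B' * B + r)) [0..<B]) else FALSEc)" for d p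
  define Cn where "Cn d = map (\<lambda>t. tab (\<lambda>v. odd (rep (bnum v) div 2^t)) (map (subst (\<sigma> d)) (C d))) [0..<B]" for d
  define Z where "Z = 1 + 2^B * (1 + B + B)"
  define a2 where "a2 = 1 + 2^B'*(1+B') + 2*(2^B'*B'*a*Z)"
  have sig_ok: "(\<lambda>p. ceval (inbits B xs) (\<sigma> d p)) = inbits B' (map \<pi> xs)"
    if xs: "xs \<in> leaf_configs m k d" for xs d
  proof
    fix p
    have len: "length xs = k^d" and xsm: "set xs \<subseteq> {..<m}" using xs by (auto simp: leaf_configs_def)
    show "ceval (inbits B xs) (\<sigma> d p) = inbits B' (map \<pi> xs) p"
    proof (cases "p < k^d * B'")
      case True
      have B'pos: "B' > 0" using True by (cases B') auto
      define q where "q = p div B'"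
      have q: "q < length xs" using True len B'pos unfolding q_def by (simp add: div_less_iff_less_mult)
      have xq: "xs ! q < m" using xsm q nth_mem by blast
      have bits: "map (\<lambda>r. ceval (inbits B xs) (Inp (q*B + r))) [0..<B] = map (\<lambda>r. odd (xs!q div 2^r)) [0..<B]"
      proof (intro map_cong refl)
        fix r assume "r \<in> set [0..<B]"
        hence r: "r < B" by simp
        have "q*B + r < q*B + B" using r by simp
        also have "\<dots> = (q+1)*B" by simp
        also have "\<dots> \<le> length xs * B" using q by (intro mult_right_mono) auto
        finally have "q*B + r < length xs * B" .
        moreover have "(q*B + r) div B = q" "(q*B+r) mod B = r" using r by auto
        ultimately show "ceval (inbits B xs) (Inp (q*B + r)) = odd (xs!q div 2^r)" by (simp add: inbits_def)
      qed
      have bn: "bnum (map (\<lambda>r. odd (xs!q div 2^r)) [0..<B]) = xs ! q"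
        using bits_sum[where B=B and x="xs!q"] xq mB by (simp add: bnum_map_upt)
      have bits': "map (\<lambda>r. inbits B xs (q*B + r)) [0..<B] = map (\<lambda>r. odd (xs!q div 2^r)) [0..<B]"
        using bits by (simp only: ceval.simps)
      have bits2: "bnum (map (\<lambda>r. inbits B xs (q*B + r)) [0..<B]) = xs ! q"
        by (simp only: bits' bn)
      have "ceval (inbits B xs) (\<sigma> d p) = odd (\<pi> (xs ! q) div 2^(p mod B'))"
        using True bits2 by (simp add: \<sigma>_def ceval_tab q_def comp_def)
      then show ?thesis using True len B'pos q by (simp add: inbits_def q_def mult.commute)
    next
      case False
      then show ?thesis using len by (simp add: \<sigma>_def inbits_def mult.commute)
    qed
  qed
  have fun_ok: "\<forall>xs\<in>leaf_configs m k d. circ_fun B (Cn d) xs = rep (circ_fun B' (C d) (map \<pi> xs)) mod 2^B" for d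
  proof
    fix xs assume xs: "xs \<in> leaf_configs m k d"
    have e1: "map (\<lambda>x. ceval (inbits B xs) (subst (\<sigma> d) x)) (C d) = map (ceval (inbits B' (map \<pi> xs))) (C d)"
      by (simp add: ceval_subst sig_ok[OF xs])
    have "circ_fun B (Cn d) xs = (\<Sum>t<B. if odd (rep (circ_fun B' (C d) (map \<pi> xs)) div 2^t) then 2^t else 0)"
      by (simp add: circ_fun_bnum[of B] Cn_def bnum_map_upt ceval_tab e1 comp_def) (simp add: circ_fun_bnum)
    thus "circ_fun B (Cn d) xs = rep (circ_fun B' (C d) (map \<pi> xs)) mod 2^B" by (simp add: bits_sum)
  qed
  have sdepth: "cdepth (\<sigma> d p) \<le> 3" for d p
    using cdepth_tab[of "map (\<lambda>r. Inp (p div B' * B + r)) [0..<B]" 0] by (auto simp: \<sigma>_def FALSEc_def)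
  have ssize: "csize (\<sigma> d p) \<le> Z" for d p
  proof -
    have "csize (tab P (map (\<lambda>r. Inp (p div B' * B + r)) [0..<B])) \<le> Z" for P
      using csize_tab[of P "map (\<lambda>r. Inp (p div B' * B + r)) [0..<B]"]
      by (simp add: Z_def comp_def sum_list_triv)
    thus ?thesis by (auto simp: \<sigma>_def FALSEc_def Z_def)
  qed
  have Z1: "1 \<le> Z" by (simp add: Z_def)
  have main: "length (Cn d) = B \<and>
        (\<forall>g\<in>set (Cn d). cdepth g \<le> c + 6 \<and> csize g \<le> a2 * (k ^ d * B) ^ e + a2) \<and>
        success M m k d (circ_fun B (Cn d)) \<ge> 1 / real m + real m' * \<delta> / real m" if d: "d \<ge> d0" for d
  proof (intro conjI ballI)
    have lenC: "length (C d) = B'" and gC: "\<forall>g\<in>set (C d). cdepth g \<le> c \<and> csize g \<le> a * (k ^ d * B') ^ e + a"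
      and succ: "success M' m' k d (circ_fun B' (C d)) \<ge> 1 / real m' + \<delta>"
      using HC d B'_def by auto
    show "length (Cn d) = B" by (simp add: Cn_def)
    fix g assume "g \<in> set (Cn d)"
    then obtain t where g: "g = tab (\<lambda>v. odd (rep (bnum v) div 2^t)) (map (subst (\<sigma> d)) (C d))"
      by (auto simp: Cn_def)
    have "\<forall>c0\<in>set (map (subst (\<sigma> d)) (C d)). cdepth c0 \<le> c + 3"
    proof
      fix c0 assume "c0 \<in> set (map (subst (\<sigma> d)) (C d))"
      then obtain c1 where "c1 \<in> set (C d)" "c0 = subst (\<sigma> d) c1" by auto
      thus "cdepth c0 \<le> c + 3" using cdepth_subst[of "\<sigma> d" 3 c1] sdepth gC by fastforce
    qed
    from cdepth_tab[OF this] show "cdepth g \<le> c + 6" unfolding g by (simp add: add.commute)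
    define X where "X = (k ^ d * B') ^ e"
    define Y where "Y = (k ^ d * B) ^ e"
    have XY: "X \<le> Y" unfolding X_def Y_def using BB by (intro power_mono mult_le_mono2) auto
    have "sum_list (map csize (map (subst (\<sigma> d)) (C d))) \<le> length (map (subst (\<sigma> d)) (C d)) * ((a*X+a)*Z)"
    proof (rule sum_list_le_len, rule ballI)
      fix c0 assume "c0 \<in> set (map (subst (\<sigma> d)) (C d))"
      then obtain c1 where c1: "c1 \<in> set (C d)" "c0 = subst (\<sigma> d) c1" by auto
      have "csize c0 \<le> csize c1 * Z" using csize_subst[of "\<sigma> d" Z c1] ssize Z1 c1 by auto
      also have "\<dots> \<le> (a*X+a)*Z" using gC c1 unfolding X_def by (intro mult_right_mono) auto
      finally show "csize c0 \<le> (a*X+a)*Z" .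
    qed
    hence "sum_list (map csize (map (subst (\<sigma> d)) (C d))) \<le> B' * ((a*X+a)*Z)" using lenC by simp
    hence Sle: "sum_list (map csize (map (subst (\<sigma> d)) (C d))) \<le> B' * ((a*X+a)*Z)" .
    have "csize g \<le> 1 + 2^B' * (1 + B' + sum_list (map csize (map (subst (\<sigma> d)) (C d))))"
      using csize_tab[of "\<lambda>v. odd (rep (bnum v) div 2^t)" "map (subst (\<sigma> d)) (C d)"] lenC
      unfolding g by (simp only: length_map)
    also have "\<dots> \<le> 1 + 2^B' * (1 + B' + B' * ((a*X+a)*Z))"
      using Sle by (intro add_le_mono mult_le_mono2 le_refl) auto
    also have "\<dots> \<le> a2 * Y + a2" unfolding a2_def by (rule arith_bound[OF XY])
    finally show "csize g \<le> a2 * (k ^ d * B) ^ e + a2" unfolding Y_def .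
  next
    have lenC: "length (C d) = B'"
      and succ: "success M' m' k d (circ_fun B' (C d)) \<ge> 1 / real m' + \<delta>"
      using HC d B'_def by auto
    let ?H = "(\<Sum>i<m'. \<Sum>ys\<in>leaf_configs m' k d. leafprob M' m' k d i ys * (if circ_fun B' (C d) ys = i then 1 else 0))"
    let ?L = "(\<Sum>j<m. \<Sum>xs\<in>leaf_configs m k d. leafprob M m k d j xs * (if circ_fun B (Cn d) xs = j then 1 else 0))"
    have ge: "?L \<ge> ?H" by (rule success_ge[OF nonneg A1 A2 rep fun_ok mB])
    have "?H = real m' * success M' m' k d (circ_fun B' (C d))" using m'pos by (simp add: success_def)
    also have "\<dots> \<ge> real m' * (1 / real m' + \<delta>)" using succ by (intro mult_left_mono) auto
    finally have "?H \<ge> 1 + real m' * \<delta>" using m'pos by (simp add: algebra_simps)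
    hence "?L / real m \<ge> (1 + real m' * \<delta>) / real m" using ge mpos by (intro divide_right_mono) auto
    thus "success M m k d (circ_fun B (Cn d)) \<ge> 1 / real m + real m' * \<delta> / real m"
      by (simp add: success_def add_divide_distrib)
  qed
  have "real m' * \<delta> / real m > 0" using m'pos mpos \<delta> by simp
  thus ?thesis unfolding TC0_detectable_def B_def[symmetric] using main by blast
qed

end
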